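(* Let $bTL_n(q)$ be the quotient of $bH_n(q)$ by the two-sided ideal generated by the Steinberg elements $z_{i,j}=e_ie_j(1+qz_i+qz_j+q^2z_iz_j+q^2z_jz_i+q^3z_iz_jz_i)$, $|i-j|=1$, and put $d_i=q^{-1}e_i+z_i$. Then $bTL_n(q)$ is presented by generators $e_1,\ldots,e_{n-1}$ and $d_1,\ldots,d_{n-1}$ subject to: $e_i^2=e_i$, $e_ie_j=e_je_i$; $d_i^2=(q+q^{-1})d_i$; $d_id_jd_i=e_jd_ie_j$ for $|i-j|=1$; $d_id_j=d_jd_i$ for $|i-j|>1$; $d_ie_i=d_i$; $d_ie_j=e_jd_i$ for all $i,j$.
   Context: $\mathbb{S}=\mathbb{C}[q,q^{-1}]$. The tied--boxed Hecke algebra $bH_n(q)$ is the $\mathbb{S}$--algebra presented by generators $e_1,\dots,e_{n-1}$, $z_1,\dots,z_{n-1}$ and relations: $e_i^2=e_i$, $e_ie_j=e_je_i$; $z_iz_jz_i=z_jz_iz_j$ if $|i-j|=1$, $z_iz_j=z_jz_i$ if $|i-j|>1$; $e_iz_i=z_i$; $e_iz_j=z_je_i$; $z_i^2=e_i+(q-q^{-1})z_i$. *)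

theory Defs
  imports Complex_Main
begin

text \<open>An S-algebra, S = C[q,q^-1], is a ring A together with a ring homomorphism
  S -> Z(A); equivalently a ring homomorphism c : C -> A with central image
  together with a central unit q (with inverse qi) of A.\<close>
definition S_algebra :: "(complex \<Rightarrow> 'a::ring_1) \<Rightarrow> 'a \<Rightarrow> 'a \<Rightarrow> bool" where
  "S_algebra c q qi \<longleftrightarrow>
     c 1 = 1 \<and> (\<forall>x y. c (x + y) = c x + c y) \<and> (\<forall>x y. c (x * y) = c x * c y) \<and>
     (\<forall>x a. c x * a = a * c x) \<and>
     (\<forall>a. q * a = a * q) \<and> q * qi = 1 \<and> qi * q = 1"

definition adj :: "nat \<Rightarrow> nat \<Rightarrow> bool" where
  "adj i j \<longleftrightarrow> i = j + 1 \<or> j = i + 1"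

definition far :: "nat \<Rightarrow> nat \<Rightarrow> bool" where
  "far i j \<longleftrightarrow> i + 1 < j \<or> j + 1 < i"

definition bH_rel :: "'a::ring_1 \<Rightarrow> 'a \<Rightarrow> nat \<Rightarrow> (nat \<Rightarrow> 'a) \<Rightarrow> (nat \<Rightarrow> 'a) \<Rightarrow> bool" where
  "bH_rel q qi n e z \<longleftrightarrow>
     (\<forall>i\<in>{1..<n}. e i * e i = e i) \<and>
     (\<forall>i\<in>{1..<n}. \<forall>j\<in>{1..<n}. e i * e j = e j * e i) \<and>
     (\<forall>i\<in>{1..<n}. \<forall>j\<in>{1..<n}. adj i j \<longrightarrow> z i * z j * z i = z j * z i * z j) \<and>
     (\<forall>i\<in>{1..<n}. \<forall>j\<in>{1..<n}. far i j \<longrightarrow> z i * z j = z j * z i) \<and>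
     (\<forall>i\<in>{1..<n}. e i * z i = z i) \<and>
     (\<forall>i\<in>{1..<n}. \<forall>j\<in>{1..<n}. e i * z j = z j * e i) \<and>
     (\<forall>i\<in>{1..<n}. z i * z i = e i + (q - qi) * z i)"

definition steinberg :: "'a::ring_1 \<Rightarrow> (nat \<Rightarrow> 'a) \<Rightarrow> (nat \<Rightarrow> 'a) \<Rightarrow> nat \<Rightarrow> nat \<Rightarrow> 'a" where
  "steinberg q e z i j = e i * e j *
     (1 + q * z i + q * z j + q^2 * (z i * z j) + q^2 * (z j * z i) + q^3 * (z i * z j * z i))"

definition bTL_rel :: "'a::ring_1 \<Rightarrow> 'a \<Rightarrow> nat \<Rightarrow> (nat \<Rightarrow> 'a) \<Rightarrow> (nat \<Rightarrow> 'a) \<Rightarrow> bool" where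
  "bTL_rel q qi n e z \<longleftrightarrow> bH_rel q qi n e z \<and>
     (\<forall>i\<in>{1..<n}. \<forall>j\<in>{1..<n}. adj i j \<longrightarrow> steinberg q e z i j = 0)"

definition bTL_d_rel :: "'a::ring_1 \<Rightarrow> 'a \<Rightarrow> nat \<Rightarrow> (nat \<Rightarrow> 'a) \<Rightarrow> (nat \<Rightarrow> 'a) \<Rightarrow> bool" where
  "bTL_d_rel q qi n e d \<longleftrightarrow>
     (\<forall>i\<in>{1..<n}. e i * e i = e i) \<and>
     (\<forall>i\<in>{1..<n}. \<forall>j\<in>{1..<n}. e i * e j = e j * e i) \<and>
     (\<forall>i\<in>{1..<n}. d i * d i = (q + qi) * d i) \<and>
     (\<forall>i\<in>{1..<n}. \<forall>j\<in>{1..<n}. adj i j \<longrightarrow> d i * d j * d i = e j * d i * e j) \<and>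
     (\<forall>i\<in>{1..<n}. \<forall>j\<in>{1..<n}. far i j \<longrightarrow> d i * d j = d j * d i) \<and>
     (\<forall>i\<in>{1..<n}. d i * e i = d i) \<and>
     (\<forall>i\<in>{1..<n}. \<forall>j\<in>{1..<n}. d i * e j = e j * d i)"

end

theory Submission
  imports Defs
begin

locale cen =
  fixes q a :: "'a::ring_1"
  assumes qa: "q*a = 1" and aq: "a*q = 1"
    and qc: "\<And>x. x*q = q*x" and ac: "\<And>x. x*a = a*x"
begin

lemma qa': "q*(a*x) = x" by (metis qa mult.assoc mult_1_left)
lemma aq': "a*(q*x) = x" by (metis aq mult.assoc mult_1_left)
lemma qc': "x*(q*y) = q*(x*y)" by (metis qc mult.assoc)
lemma ac': "x*(a*y) = a*(x*y)" by (metis ac mult.assoc)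

lemma comm_iff:
  assumes eij: "ej*ei = ei*ej"
  shows "(a*ej+zj)*ei = ei*(a*ej+zj) \<longleftrightarrow> zj*ei = ei*zj"
  by (simp add: algebra_simps eij ac[of ei] ac'[of ei])

lemma single_fwd:
  assumes ei2: "ei*ei = ei" and ez: "ei*zi = zi" and ezc: "ei*zi = zi*ei"
    and z2: "zi*zi = ei + (q-a)*zi"
  shows "(a*ei+zi)*(a*ei+zi) = (q+a)*(a*ei+zi)" "(a*ei+zi)*ei = a*ei+zi"
proof -
  have ze: "zi*ei = zi" using ez ezc by simp
  show "(a*ei+zi)*(a*ei+zi) = (q+a)*(a*ei+zi)"
    by (simp add: algebra_simps ei2 ez ze z2 ac[of ei] ac[of zi] ac'[of ei] ac'[of zi] qa' qa)
  show "(a*ei+zi)*ei = a*ei+zi"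
    by (simp add: algebra_simps ei2 ze)
qed

lemma single_bwd:
  assumes ei2: "ei*ei = ei" and de: "(a*ei+zi)*ei = a*ei+zi"
    and dc: "ei*(a*ei+zi) = (a*ei+zi)*ei"
    and d2: "(a*ei+zi)*(a*ei+zi) = (q+a)*(a*ei+zi)"
  shows "ei*zi = zi" "zi*zi = ei + (q-a)*zi"
proof -
  define di where "di = a*ei+zi"
  have zi: "zi = di - a*ei" unfolding di_def by simp
  have de': "di*ei = di" and dc': "ei*di = di*ei" and d2': "di*di = (q+a)*di"
    using de dc d2 di_def by auto
  show "ei*zi = zi" unfolding zi
    by (simp add: algebra_simps ei2 de' dc' ac[of ei] ac'[of ei])
  show "zi*zi = ei + (q-a)*zi" unfolding zi
    by (simp add: algebra_simps ei2 de' dc' d2' ac[of ei] ac[of di] ac'[of ei] ac'[of di] qa' qa aq aq')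
qed

lemma far_iff:
  assumes eij: "ej*ei = ei*ej"
    and c1: "zi*ei = ei*zi" and c2: "zi*ej = ej*zi" and c3: "zj*ei = ei*zj" and c4: "zj*ej = ej*zj"
  shows "(a*ei+zi)*(a*ej+zj) = (a*ej+zj)*(a*ei+zi) \<longleftrightarrow> zi*zj = zj*zi"
  by (simp add: algebra_simps eij c1 c2 c3 c4 ac[of ei] ac[of ej] ac[of zi] ac[of zj] ac'[of ei] ac'[of ej] ac'[of zi] ac'[of zj])

lemma pair:
  fixes ei ej zi zj :: 'a
  defines "di \<equiv> a*ei+zi" and "dj \<equiv> a*ej+zj"
  assumes ei2: "ei*ei = ei" and ej2: "ej*ej = ej" and eij: "ej*ei = ei*ej"
    and di2: "di*di = (q+a)*di" and dj2: "dj*dj = (q+a)*dj"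
    and die: "di*ei = di" and dje: "dj*ej = dj"
    and c1: "ei*di = di*ei" and c2: "ej*di = di*ej" and c3: "ei*dj = dj*ei" and c4: "ej*dj = dj*ej"
  shows "ei*ej*(1 + q*zi + q*zj + q^2*(zi*zj) + q^2*(zj*zi) + q^3*(zi*zj*zi))
     = q^3 * (di*dj*di - di*ej)"
   and "zi*zj*zi - zj*zi*zj = (di*dj*di - di*ej) - (dj*di*dj - dj*ei)"
proof -
  have zi: "zi = di - a*ei" and zj: "zj = dj - a*ej" unfolding di_def dj_def by simp_all
  have ei2': "ei*(ei*x) = ei*x" for x by (metis ei2 mult.assoc)
  have ej2': "ej*(ej*x) = ej*x" for x by (metis ej2 mult.assoc)
  have eij': "ej*(ei*x) = ei*(ej*x)" for x by (metis eij mult.assoc)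
  have di2': "di*(di*x) = (q+a)*(di*x)" for x by (metis di2 mult.assoc)
  have dj2': "dj*(dj*x) = (q+a)*(dj*x)" for x by (metis dj2 mult.assoc)
  have die': "di*(ei*x) = di*x" for x by (metis die mult.assoc)
  have dje': "dj*(ej*x) = dj*x" for x by (metis dje mult.assoc)
  have die2: "di*(ej*ei) = di*ej" by (metis die c2 mult.assoc eij)
  have die2': "di*(ej*(ei*x)) = di*(ej*x)" for x by (metis die2 mult.assoc eij')
  have dje2: "dj*(ei*ej) = dj*ei" by (metis dje c3 mult.assoc)
  have dje2': "dj*(ei*(ej*x)) = dj*(ei*x)" for x by (metis dje2 mult.assoc)
  have c1': "ei*(di*x) = di*(ei*x)" for x by (metis c1 mult.assoc)
  have c2': "ej*(di*x) = di*(ej*x)" for x by (metis c2 mult.assoc)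
  have c3': "ei*(dj*x) = dj*(ei*x)" for x by (metis c3 mult.assoc)
  have c4': "ej*(dj*x) = dj*(ej*x)" for x by (metis c4 mult.assoc)
  have w1: "di*(dj*(di*ej)) = di*(dj*di)" by (metis c2 dje mult.assoc)
  have w2: "dj*(di*(dj*ei)) = dj*(di*dj)" by (metis c3 die mult.assoc)
  have w3: "dj*(di*ej) = dj*di" by (metis c2 dje mult.assoc)
  have w4: "di*(dj*ei) = di*dj" by (metis c3 die mult.assoc)
  have w3': "dj*(di*(ej*x)) = dj*(di*x)" for x by (metis c2 dje mult.assoc)
  have w4': "di*(dj*(ei*x)) = di*(dj*x)" for x by (metis c3 die mult.assoc)
  note rules = w1 w2 w3 w4 w3' w4' algebra_simps power2_eq_square power3_eq_cube qa qa' aq aq' qc[of di] qc[of dj] qc[of ei] qc[of ej]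
       ac[of di] ac[of dj] ac[of ei] ac[of ej] qc'[of di] qc'[of dj] qc'[of ei] qc'[of ej] ac'[of di] ac'[of dj] ac'[of ei] ac'[of ej] ei2 ei2' ej2 ej2' eij eij'
       di2 di2' dj2 dj2' die die' dje dje' die2 die2' dje2 dje2' c1 c1' c2 c2' c3 c3' c4 c4'
  show "ei*ej*(1 + q*zi + q*zj + q^2*(zi*zj) + q^2*(zj*zi) + q^3*(zi*zj*zi))
     = q^3 * (di*dj*di - di*ej)" unfolding zi zj by (simp add: rules)
  show "zi*zj*zi - zj*zi*zj = (di*dj*di - di*ej) - (dj*di*dj - dj*ei)"
    unfolding zi zj by (simp add: rules)
qed

end


lemma S_cen: assumes "S_algebra c q qi" shows "cen q qi"
proof -
  have qc: "\<And>x. x*q = q*x" and qa: "q*qi = 1" and aq: "qi*q = 1"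
    using assms unfolding S_algebra_def by metis+
  have ac: "x*qi = qi*x" for x
  proof -
    have "qi*x = qi*x*(q*qi)" by (simp add: qa)
    also have "... = qi*(x*q)*qi" by (simp add: mult.assoc)
    also have "... = qi*(q*x)*qi" by (simp add: qc)
    also have "... = x*qi" by (simp add: aq flip: mult.assoc)
    finally show ?thesis by simp
  qed
  show ?thesis by unfold_locales (fact qa aq qc ac)+
qed

lemma adj_sym: "adj i j \<Longrightarrow> adj j i" unfolding adj_def by auto
lemma far_sym: "far i j \<Longrightarrow> far j i" unfolding far_def by auto

theorem proposition6p1:
  fixes c :: "complex \<Rightarrow> 'a::ring_1" and q qi :: 'a and n :: nat
    and e z :: "nat \<Rightarrow> 'a"
  assumes "S_algebra c q qi"
  shows "bTL_rel q qi n e z \<longleftrightarrow> bTL_d_rel q qi n e (\<lambda>i. qi * e i + z i)"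
proof -
  interpret cen q qi using S_cen[OF assms] .
  let ?I = "{1..<n}"
  show ?thesis
  proof
    assume R: "bTL_rel q qi n e z"
    have e2: "\<And>i. i \<in> ?I \<Longrightarrow> e i * e i = e i"
      and ec: "\<And>i j. i \<in> ?I \<Longrightarrow> j \<in> ?I \<Longrightarrow> e i * e j = e j * e i"
      and br: "\<And>i j. i \<in> ?I \<Longrightarrow> j \<in> ?I \<Longrightarrow> adj i j \<Longrightarrow> z i * z j * z i = z j * z i * z j"
      and fa: "\<And>i j. i \<in> ?I \<Longrightarrow> j \<in> ?I \<Longrightarrow> far i j \<Longrightarrow> z i * z j = z j * z i"
      and ez: "\<And>i. i \<in> ?I \<Longrightarrow> e i * z i = z i"
      and ezc: "\<And>i j. i \<in> ?I \<Longrightarrow> j \<in> ?I \<Longrightarrow> e i * z j = z j * e i"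
      and z2: "\<And>i. i \<in> ?I \<Longrightarrow> z i * z i = e i + (q - qi) * z i"
      and st: "\<And>i j. i \<in> ?I \<Longrightarrow> j \<in> ?I \<Longrightarrow> adj i j \<Longrightarrow> steinberg q e z i j = 0"
      using R unfolding bTL_rel_def bH_rel_def by blast+
    have d2: "(qi*e i+z i)*(qi*e i+z i) = (q+qi)*(qi*e i+z i)"
      and de: "(qi*e i+z i)*e i = qi*e i+z i" if "i \<in> ?I" for i
      using single_fwd[OF e2[OF that] ez[OF that] ezc[OF that that] z2[OF that]] by auto
    have dc: "(qi*e i+z i)*e j = e j*(qi*e i+z i)" if "i \<in> ?I" "j \<in> ?I" for i j
      using comm_iff[of "e i" "e j" "z i"] ec[OF that] ezc[OF that(2,1)] by auto
    have df: "(qi*e i+z i)*(qi*e j+z j) = (qi*e j+z j)*(qi*e i+z i)"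
      if "i \<in> ?I" "j \<in> ?I" "far i j" for i j
      using far_iff[of "e j" "e i" "z i" "z j"] ec[OF that(1,2)] ezc that fa[OF that] by metis
    have db: "(qi*e i+z i)*(qi*e j+z j)*(qi*e i+z i) = e j*(qi*e i+z i)*e j"
      if "i \<in> ?I" "j \<in> ?I" "adj i j" for i j
    proof -
      let ?di = "qi*e i+z i" and ?dj = "qi*e j+z j"
      have "steinberg q e z i j = q^3 * (?di*?dj*?di - ?di*e j)"
        unfolding steinberg_def
        using pair(1)[OF e2[OF that(1)] e2[OF that(2)] ec[OF that(2,1)] d2[OF that(1)] d2[OF that(2)] de[OF that(1)] de[OF that(2)]
          dc[OF that(1,1), symmetric] dc[OF that(1,2), symmetric] dc[OF that(2,1), symmetric] dc[OF that(2,2), symmetric]] by simp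
      hence "q^3 * (?di*?dj*?di - ?di*e j) = 0" using st[OF that] by simp
      hence "qi^3 * (q^3 * (?di*?dj*?di - ?di*e j)) = 0" by simp
      moreover have "qi^3 * (q^3 * x) = x" for x
        by (simp add: power3_eq_cube mult.assoc qa' aq')
      ultimately have "?di*?dj*?di = ?di*e j" by simp
      moreover have "e j*?di*e j = ?di*e j"
        using dc[OF that(1,2)] e2[OF that(2)] by (metis mult.assoc)
      ultimately show ?thesis by simp
    qed
    show "bTL_d_rel q qi n e (\<lambda>i. qi * e i + z i)"
      unfolding bTL_d_rel_def using e2 ec d2 db df de dc by blast
  next
    assume D: "bTL_d_rel q qi n e (\<lambda>i. qi * e i + z i)"
    have e2: "\<And>i. i \<in> ?I \<Longrightarrow> e i * e i = e i"
      and ec: "\<And>i j. i \<in> ?I \<Longrightarrow> j \<in> ?I \<Longrightarrow> e i * e j = e j * e i"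
      and d2: "\<And>i. i \<in> ?I \<Longrightarrow> (qi*e i+z i)*(qi*e i+z i) = (q+qi)*(qi*e i+z i)"
      and db: "\<And>i j. i \<in> ?I \<Longrightarrow> j \<in> ?I \<Longrightarrow> adj i j \<Longrightarrow>
          (qi*e i+z i)*(qi*e j+z j)*(qi*e i+z i) = e j*(qi*e i+z i)*e j"
      and df: "\<And>i j. i \<in> ?I \<Longrightarrow> j \<in> ?I \<Longrightarrow> far i j \<Longrightarrow>
          (qi*e i+z i)*(qi*e j+z j) = (qi*e j+z j)*(qi*e i+z i)"
      and de: "\<And>i. i \<in> ?I \<Longrightarrow> (qi*e i+z i)*e i = qi*e i+z i"
      and dc: "\<And>i j. i \<in> ?I \<Longrightarrow> j \<in> ?I \<Longrightarrow> (qi*e i+z i)*e j = e j*(qi*e i+z i)"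
      using D unfolding bTL_d_rel_def by blast+
    have ezc: "e i * z j = z j * e i" if "i \<in> ?I" "j \<in> ?I" for i j
      using comm_iff[of "e j" "e i" "z j"] ec[OF that] dc[OF that(2,1)] by auto
    have ez: "e i * z i = z i" and z2: "z i * z i = e i + (q - qi) * z i" if "i \<in> ?I" for i
      using single_bwd[OF e2[OF that] de[OF that] dc[OF that that, symmetric] d2[OF that]] by auto
    have fa: "z i * z j = z j * z i" if "i \<in> ?I" "j \<in> ?I" "far i j" for i j
      using far_iff[of "e j" "e i" "z i" "z j"] ec[OF that(1,2)] ezc that df[OF that] by metis
    have dbr: "(qi*e i+z i)*(qi*e j+z j)*(qi*e i+z i) = (qi*e i+z i)*e j"
      if "i \<in> ?I" "j \<in> ?I" "adj i j" for i j
      using db[OF that] dc[OF that(1,2)] e2[OF that(2)] by (metis mult.assoc)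
    have br: "z i * z j * z i = z j * z i * z j" and st: "steinberg q e z i j = 0"
      if "i \<in> ?I" "j \<in> ?I" "adj i j" for i j
    proof -
      have P1: "steinberg q e z i j = q^3 * ((qi*e i+z i)*(qi*e j+z j)*(qi*e i+z i) - (qi*e i+z i)*e j)"
        unfolding steinberg_def
        using pair(1)[OF e2[OF that(1)] e2[OF that(2)] ec[OF that(2,1)] d2[OF that(1)] d2[OF that(2)] de[OF that(1)] de[OF that(2)]
          dc[OF that(1,1), symmetric] dc[OF that(1,2), symmetric] dc[OF that(2,1), symmetric] dc[OF that(2,2), symmetric]] by simp
      have P2: "z i * z j * z i - z j * z i * z j = ((qi*e i+z i)*(qi*e j+z j)*(qi*e i+z i) - (qi*e i+z i)*e j)
          - ((qi*e j+z j)*(qi*e i+z i)*(qi*e j+z j) - (qi*e j+z j)*e i)"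
        using pair(2)[OF e2[OF that(1)] e2[OF that(2)] ec[OF that(2,1)] d2[OF that(1)] d2[OF that(2)] de[OF that(1)] de[OF that(2)]
          dc[OF that(1,1), symmetric] dc[OF that(1,2), symmetric] dc[OF that(2,1), symmetric] dc[OF that(2,2), symmetric]] by simp
      show "steinberg q e z i j = 0" using P1 dbr[OF that] by simp
      show "z i * z j * z i = z j * z i * z j"
        using P2 dbr[OF that] dbr[OF that(2,1) adj_sym[OF that(3)]] by simp
    qed
    show "bTL_rel q qi n e z"
      unfolding bTL_rel_def bH_rel_def using e2 ec br fa ez ezc z2 st by blast
  qed
qed

end
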